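(* For every $\varepsilon > 0$, on any instance of MDMS the algorithm $\mathrm{GIST}(V, g, k, \varepsilon)$ outputs a set $S \subseteq V$ with $|S| \le k$ and $$f(S) \ge \left(\tfrac{1}{2} - \varepsilon\right)\cdot \mathrm{OPT},$$ and it uses $O(nk \log_{1+\varepsilon}(1/\varepsilon))$ value-oracle queries to $g$.
   Context: Let $V$ be a finite set of $n$ points in a metric space with metric $\mathrm{dist}$, and let $d_{\max} = \max_{u,v \in V}\mathrm{dist}(u,v)$. For $u \in V$ and $S \subseteq V$ let $\mathrm{dist}(u,S) = \min_{v \in S}\mathrm{dist}(u,v)$, with $\mathrm{dist}(u,\emptyset) = \infty$. The max-min diversity is $\mathrm{div}(S) = \min_{u,v \in S,\, u \ne v}\mathrm{dist}(u,v)$ if $|S| \ge 2$, and $\mathrm{div}(S) = d_{\max}$ if $|S| \le 1$. Let $g : 2^V \to \mathbb{R}_{\ge 0}$ be a nonnegative monotone submodular function (accessed via a value oracle), let $\lambda \ge 0$, let $k \ge 1$ be an integer, and let $f(S) = g(S) + \lambda\cdot \mathrm{div}(S)$. The MDMS problem is to maximize $f(S)$ subject to $S \subseteq V$, $|S| \le k$; $\mathrm{OPT}$ denotes the optimal value. $\mathrm{GreedyIndependentSet}(V,g,d,k)$: initialize $S \gets \emptyset$; for $i = 1,\dots,k$: let $C = \{v \in V\setminus S : \mathrm{dist}(v,S) \ge d\}$; if $C = \emptyset$ return $S$; otherwise pick $t \in \arg\max_{v \in C} \big(g(S\cup\{v\}) - g(S)\big)$ (ties broken arbitrarily) and set $S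 \gets S \cup\{t\}$. After the loop, return $S$. $\mathrm{GIST}(V,g,k,\varepsilon)$: set $S \gets \mathrm{GreedyIndependentSet}(V,g,0,k)$. Let $T = \{u,v\}$ be two points with $\mathrm{dist}(u,v) = d_{\max}$; if $f(T) > f(S)$ and $k \ge 2$, set $S \gets T$. Let $D = \{(1+\varepsilon)^i \cdot \varepsilon d_{\max}/2 : i \in \mathbb{Z}_{\ge 0},\ (1+\varepsilon)^i \le 2/\varepsilon\}$. For each $d \in D$: set $T \gets \mathrm{GreedyIndependentSet}(V,g,d,k)$ and if $f(T) \ge f(S)$ set $S \gets T$. Return $S$. *)

theory Defs
  imports "HOL-Analysis.Analysis"
begin

definition metric_on :: "'a set \<Rightarrow> ('a \<Rightarrow> 'a \<Rightarrow> real) \<Rightarrow> bool" where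
  "metric_on V dst \<longleftrightarrow>
     (\<forall>u\<in>V. \<forall>v\<in>V. dst u v \<ge> 0 \<and> (dst u v = 0 \<longleftrightarrow> u = v) \<and> dst u v = dst v u) \<and>
     (\<forall>u\<in>V. \<forall>v\<in>V. \<forall>w\<in>V. dst u w \<le> dst u v + dst v w)"

definition nonneg_monotone_submodular :: "'a set \<Rightarrow> ('a set \<Rightarrow> real) \<Rightarrow> bool" where
  "nonneg_monotone_submodular V g \<longleftrightarrow>
     (\<forall>A. A \<subseteq> V \<longrightarrow> g A \<ge> 0) \<and>
     (\<forall>A B. A \<subseteq> B \<and> B \<subseteq> V \<longrightarrow> g A \<le> g B) \<and>
     (\<forall>A B x. A \<subseteq> B \<and> B \<subseteq> V \<and> x \<in> V - B \<longrightarrow>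
        g (insert x A) - g A \<ge> g (insert x B) - g B)"

definition mdms_instance ::
  "'a set \<Rightarrow> ('a \<Rightarrow> 'a \<Rightarrow> real) \<Rightarrow> ('a set \<Rightarrow> real) \<Rightarrow> real \<Rightarrow> nat \<Rightarrow> bool" where
  "mdms_instance V dst g lam k \<longleftrightarrow>
     finite V \<and> V \<noteq> {} \<and> metric_on V dst \<and> nonneg_monotone_submodular V g \<and> lam \<ge> 0 \<and> k \<ge> 1"

definition dmax :: "'a set \<Rightarrow> ('a \<Rightarrow> 'a \<Rightarrow> real) \<Rightarrow> real" where
  "dmax V dst = Max {dst u v | u v. u \<in> V \<and> v \<in> V}"

definition dist_set :: "('a \<Rightarrow> 'a \<Rightarrow> real) \<Rightarrow> 'a \<Rightarrow> 'a set \<Rightarrow> ereal" where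
  "dist_set dst u S = (if S = {} then \<infinity> else ereal (Min (dst u ` S)))"

definition div_mm :: "'a set \<Rightarrow> ('a \<Rightarrow> 'a \<Rightarrow> real) \<Rightarrow> 'a set \<Rightarrow> real" where
  "div_mm V dst S = (if card S \<ge> 2 then Min {dst u v | u v. u \<in> S \<and> v \<in> S \<and> u \<noteq> v}
                     else dmax V dst)"

definition mdms_f ::
  "'a set \<Rightarrow> ('a \<Rightarrow> 'a \<Rightarrow> real) \<Rightarrow> ('a set \<Rightarrow> real) \<Rightarrow> real \<Rightarrow> 'a set \<Rightarrow> real" where
  "mdms_f V dst g lam S = g S + lam * div_mm V dst S"

definition mdms_opt ::
  "'a set \<Rightarrow> ('a \<Rightarrow> 'a \<Rightarrow> real) \<Rightarrow> ('a set \<Rightarrow> real) \<Rightarrow> real \<Rightarrow> nat \<Rightarrow> real" where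
  "mdms_opt V dst g lam k = Max (mdms_f V dst g lam ` {S. S \<subseteq> V \<and> card S \<le> k})"

definition gis_cands :: "'a set \<Rightarrow> ('a \<Rightarrow> 'a \<Rightarrow> real) \<Rightarrow> real \<Rightarrow> 'a set \<Rightarrow> 'a set" where
  "gis_cands V dst r S = {v \<in> V - S. dist_set dst v S \<ge> ereal r}"

text \<open>\<open>gis_run V g dst r k S i S' q\<close>: started in state S after i completed iterations,
  the loop may terminate with output S' having made q value-oracle queries to g.
  An iteration with nonempty candidate set C queries g(S) and g(S \<union> {v}) for all v in C.\<close>
inductive gis_run ::
  "'a set \<Rightarrow> ('a set \<Rightarrow> real) \<Rightarrow> ('a \<Rightarrow> 'a \<Rightarrow> real) \<Rightarrow> real \<Rightarrow> nat \<Rightarrow>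
   'a set \<Rightarrow> nat \<Rightarrow> 'a set \<Rightarrow> nat \<Rightarrow> bool"
  for V g dst r k where
  done_loop: "\<not> i < k \<Longrightarrow> gis_run V g dst r k S i S 0"
| no_cands: "i < k \<Longrightarrow> gis_cands V dst r S = {} \<Longrightarrow> gis_run V g dst r k S i S 0"
| step: "i < k \<Longrightarrow> gis_cands V dst r S \<noteq> {} \<Longrightarrow> t \<in> gis_cands V dst r S \<Longrightarrow>
         (\<forall>v\<in>gis_cands V dst r S. g (insert v S) - g S \<le> g (insert t S) - g S) \<Longrightarrow>
         gis_run V g dst r k (insert t S) (Suc i) S' q \<Longrightarrow>
         gis_run V g dst r k S i S' (q + card (gis_cands V dst r S) + 1)"

definition greedy_indep_set ::
  "'a set \<Rightarrow> ('a set \<Rightarrow> real) \<Rightarrow> ('a \<Rightarrow> 'a \<Rightarrow> real) \<Rightarrow> real \<Rightarrow> nat \<Rightarrow> 'a set \<Rightarrow> nat \<Rightarrow> bool" where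
  "greedy_indep_set V g dst r k S q \<longleftrightarrow> gis_run V g dst r k {} 0 S q"

definition gist_D :: "'a set \<Rightarrow> ('a \<Rightarrow> 'a \<Rightarrow> real) \<Rightarrow> real \<Rightarrow> real set" where
  "gist_D V dst \<epsilon> = {(1 + \<epsilon>) ^ i * \<epsilon> * dmax V dst / 2 | i::nat. (1 + \<epsilon>) ^ i \<le> 2 / \<epsilon>}"

text \<open>The loop over the thresholds d (in the order given by the list); each comparison
  f(T) \<ge> f(S) costs two oracle queries (g(T) and g(S)).\<close>
inductive gist_loop ::
  "'a set \<Rightarrow> ('a set \<Rightarrow> real) \<Rightarrow> ('a \<Rightarrow> 'a \<Rightarrow> real) \<Rightarrow> real \<Rightarrow> nat \<Rightarrow>
   real list \<Rightarrow> 'a set \<Rightarrow> 'a set \<Rightarrow> nat \<Rightarrow> bool"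
  for V g dst lam k where
  nil: "gist_loop V g dst lam k [] S S 0"
| cons: "greedy_indep_set V g dst d k T qT \<Longrightarrow>
         gist_loop V g dst lam k ds
           (if mdms_f V dst g lam T \<ge> mdms_f V dst g lam S then T else S) S' q \<Longrightarrow>
         gist_loop V g dst lam k (d # ds) S S' (qT + 2 + q)"

text \<open>Possible executions of GIST(V,g,k,eps): any tie-breaking in the greedy steps, any choice
  of a diametral pair, and any order of iterating over D.\<close>
definition gist ::
  "'a set \<Rightarrow> ('a set \<Rightarrow> real) \<Rightarrow> ('a \<Rightarrow> 'a \<Rightarrow> real) \<Rightarrow> real \<Rightarrow> nat \<Rightarrow> real \<Rightarrow> 'a set \<Rightarrow> nat \<Rightarrow> bool" where
  "gist V g dst lam k \<epsilon> S q \<longleftrightarrow>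
     (\<exists>S0 q0 u v ds q1.
        greedy_indep_set V g dst 0 k S0 q0 \<and>
        u \<in> V \<and> v \<in> V \<and> dst u v = dmax V dst \<and>
        distinct ds \<and> set ds = gist_D V dst \<epsilon> \<and>
        gist_loop V g dst lam k ds
          (if mdms_f V dst g lam {u, v} > mdms_f V dst g lam S0 \<and> k \<ge> 2 then {u, v} else S0)
          S q1 \<and>
        q = q0 + 2 + q1)"

end

theory Submission
  imports Defs
begin

lemma cands_iff:
  assumes "finite S"
  shows "v \<in> gis_cands V dst r S \<longleftrightarrow> v \<in> V \<and> v \<notin> S \<and> (\<forall>s\<in>S. r \<le> dst v s)"
proof (cases "S = {}")
  case True then show ?thesis by (simp add: gis_cands_def dist_set_def)
next
  case False then show ?thesis using assms
    by (auto simp add: gis_cands_def dist_set_def Min_ge_iff)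
qed

lemma cands_sub: "gis_cands V dst r S \<subseteq> V - S"
  by (auto simp: gis_cands_def)

lemma gis_exists:
  assumes "finite V"
  shows "\<exists>S' q. gis_run V g dst r k S i S' q"
proof (induction "k - i" arbitrary: S i rule: less_induct)
  case less
  show ?case
  proof (cases "i < k")
    case False then show ?thesis using gis_run.done_loop by blast
  next
    case True
    show ?thesis
    proof (cases "gis_cands V dst r S = {}")
      case True2: True
      then show ?thesis using gis_run.no_cands True by blast
    next
      case False
      have fin: "finite (gis_cands V dst r S)" using assms cands_sub
        by (meson finite_Diff finite_subset)
      obtain t where t: "t \<in> gis_cands V dst r S"
        "\<forall>v\<in>gis_cands V dst r S. g (insert v S) - g S \<le> g (insert t S) - g S"
      proof -
        let ?h = "\<lambda>v. g (insert v S) - g S"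
        have "Max (?h ` gis_cands V dst r S) \<in> ?h ` gis_cands V dst r S"
          using fin False by (intro Max_in) auto
        then obtain t where "t \<in> gis_cands V dst r S" "?h t = Max (?h ` gis_cands V dst r S)" by auto
        moreover have "\<forall>v\<in>gis_cands V dst r S. ?h v \<le> ?h t"
          using fin \<open>?h t = _\<close> by (simp add: Max_ge)
        ultimately show ?thesis using that by blast
      qed
      have lt: "k - Suc i < k - i" using True by simp
      obtain S' q where "gis_run V g dst r k (insert t S) (Suc i) S' q"
        using less.hyps[OF lt] by blast
      then have "gis_run V g dst r k S i S' (q + card (gis_cands V dst r S) + 1)"
        by (rule gis_run.step[OF True False t])
      then show ?thesis by blast
    qed
  qed
qed

lemma metric_sym: "metric_on V dst \<Longrightarrow> u \<in> V \<Longrightarrow> v \<in> V \<Longrightarrow> dst u v = dst v u"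
  unfolding metric_on_def by simp
lemma metric_nonneg: "metric_on V dst \<Longrightarrow> u \<in> V \<Longrightarrow> v \<in> V \<Longrightarrow> 0 \<le> dst u v"
  unfolding metric_on_def by simp
lemma metric_tri: "metric_on V dst \<Longrightarrow> u \<in> V \<Longrightarrow> v \<in> V \<Longrightarrow> w \<in> V \<Longrightarrow> dst u w \<le> dst u v + dst v w"
  unfolding metric_on_def by simp

lemma gis_inv:
  "gis_run V g dst r k S i S' q \<Longrightarrow> S \<subseteq> V \<Longrightarrow> card S \<le> i \<Longrightarrow> i \<le> k \<Longrightarrow> finite V \<Longrightarrow>
   S \<subseteq> S' \<and> S' \<subseteq> V \<and> card S' \<le> k \<and> q \<le> (k - i) * (card V + 1)"
proof (induction rule: gis_run.induct)
  case (done_loop i S)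
  have "card S \<le> k" using done_loop.prems(2,3) by (rule le_trans)
  then show ?case using done_loop.prems(1) by simp
next
  case (no_cands i S)
  have "card S \<le> k" using no_cands.prems(2,3) by (rule le_trans)
  then show ?case using no_cands.prems(1) by simp
next
  case (step i S t S' q)
  have "t \<in> V - S" using subsetD[OF cands_sub \<open>t \<in> gis_cands V dst r S\<close>] .
  then have tV: "t \<in> V" "t \<notin> S" by auto
  have fS: "finite S" using step.prems(1,4) by (rule finite_subset)
  have c1: "card (insert t S) \<le> Suc i" using tV(2) fS step.prems(2) by simp
  have s1: "insert t S \<subseteq> V" using tV(1) step.prems(1) by simp
  have i1: "Suc i \<le> k" using \<open>i < k\<close> by simp
  have IH: "insert t S \<subseteq> S' \<and> S' \<subseteq> V \<and> card S' \<le> k \<and> q \<le> (k - Suc i) * (card V + 1)"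
    by (rule step.IH[OF s1 c1 i1 step.prems(4)])
  have "gis_cands V dst r S \<subseteq> V" using cands_sub[of V dst r S] by auto
  then have c2: "card (gis_cands V dst r S) \<le> card V" using step.prems(4) by (rule card_mono[rotated])
  have "k - i = Suc (k - Suc i)" using \<open>i < k\<close> by simp
  then have e: "(k - Suc i) * (card V + 1) + (card V + 1) = (k - i) * (card V + 1)" by simp
  have "q + card (gis_cands V dst r S) + 1 \<le> (k - i) * (card V + 1)"
    using IH c2 e by linarith
  moreover have "S \<subseteq> S'" using IH by blast
  ultimately show ?case using IH by simp
qed

lemma gis_pairwise:
  "gis_run V g dst r k S i S' q \<Longrightarrow> S \<subseteq> V \<Longrightarrow> finite V \<Longrightarrow> metric_on V dst \<Longrightarrow>
   (\<forall>x\<in>S. \<forall>y\<in>S. x \<noteq> y \<longrightarrow> r \<le> dst x y) \<Longrightarrow> (\<forall>x\<in>S'. \<forall>y\<in>S'. x \<noteq> y \<longrightarrow> r \<le> dst x y)"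
proof (induction rule: gis_run.induct)
  case (done_loop i S)
  then show ?case by simp
next
  case (no_cands i S)
  then show ?case by simp
next
  case (step i S t S' q)
  have fS: "finite S" using step.prems(1,2) by (rule finite_subset)
  have t: "t \<in> V" "t \<notin> S" "\<forall>s\<in>S. r \<le> dst t s"
    using \<open>t \<in> gis_cands V dst r S\<close> unfolding cands_iff[OF fS] by auto
  have sym: "\<forall>u\<in>V. \<forall>v\<in>V. dst u v = dst v u" using metric_sym[OF step.prems(3)] by blast
  have pw: "\<forall>x\<in>insert t S. \<forall>y\<in>insert t S. x \<noteq> y \<longrightarrow> r \<le> dst x y"
  proof (intro ballI impI)
    fix x y assume xy: "x \<in> insert t S" "y \<in> insert t S" "x \<noteq> y"
    show "r \<le> dst x y"
    proof (cases "x = t")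
      case True
      then have "y \<in> S" using xy by auto
      then show ?thesis using True t by auto
    next
      case False
      then have xS: "x \<in> S" using xy by auto
      show ?thesis
      proof (cases "y = t")
        case True
        have "x \<in> V" using xS step.prems(1) by blast
        then have "dst x t = dst t x" using sym t(1) by blast
        then show ?thesis using xS t True by auto
      next
        case False
        then show ?thesis using xS xy step.prems(4) by auto
      qed
    qed
  qed
  have s1: "insert t S \<subseteq> V" using t(1) step.prems(1) by simp
  show ?case by (rule step.IH[OF s1 step.prems(2,3) pw])
qed

lemma nms_nonneg: "nonneg_monotone_submodular V g \<Longrightarrow> A \<subseteq> V \<Longrightarrow> 0 \<le> g A"
  unfolding nonneg_monotone_submodular_def by simp
lemma nms_mono: "nonneg_monotone_submodular V g \<Longrightarrow> A \<subseteq> B \<Longrightarrow> B \<subseteq> V \<Longrightarrow> g A \<le> g B"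
  unfolding nonneg_monotone_submodular_def by simp
lemma nms_sub: "nonneg_monotone_submodular V g \<Longrightarrow> A \<subseteq> B \<Longrightarrow> B \<subseteq> V \<Longrightarrow> x \<in> V \<Longrightarrow> x \<notin> B \<Longrightarrow>
   g (insert x B) - g B \<le> g (insert x A) - g A"
  unfolding nonneg_monotone_submodular_def by simp

lemma gis_mono:
  "gis_run V g dst r k S i S' q \<Longrightarrow> S \<subseteq> V \<Longrightarrow> S \<subseteq> S' \<and> S' \<subseteq> V"
proof (induction rule: gis_run.induct)
  case (done_loop i S)
  then show ?case by simp
next
  case (no_cands i S)
  then show ?case by simp
next
  case (step i S t S' q)
  have "t \<in> V - S" using subsetD[OF cands_sub \<open>t \<in> gis_cands V dst r S\<close>] .
  then have s1: "insert t S \<subseteq> V" using step.prems by simp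
  have "insert t S \<subseteq> S' \<and> S' \<subseteq> V" by (rule step.IH[OF s1])
  then show ?case by simp
qed

lemma gis_key:
  assumes nms: "nonneg_monotone_submodular V g" and met: "metric_on V dst" and r0: "0 \<le> r"
    and fV: "finite V" and OV: "Opt \<subseteq> V"
    and Opw: "\<forall>x\<in>Opt. \<forall>y\<in>Opt. x \<noteq> y \<longrightarrow> 2 * r \<le> dst x y"
  shows "gis_run V g dst r k S i S' q \<Longrightarrow> S \<subseteq> V \<Longrightarrow> B \<subseteq> Opt \<inter> gis_cands V dst r S \<Longrightarrow>
    card B + i \<le> k \<Longrightarrow> (\<Sum>x\<in>B. g (insert x S') - g S') \<le> g S' - g S"
proof (induction arbitrary: B rule: gis_run.induct)
  case (done_loop i S)
  have "B \<subseteq> V" using done_loop.prems(2) cands_sub[of V dst r S] by auto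
  then have "finite B" using fV by (rule finite_subset)
  moreover have "card B = 0" using done_loop.prems(3) done_loop.hyps by simp
  ultimately show ?case by simp
next
  case (no_cands i S)
  then have "B = {}" by simp
  then show ?case by simp
next
  case (step i S t S' q)
  let ?C = "gis_cands V dst r S"
  let ?S1 = "insert t S"
  have "t \<in> V - S" using subsetD[OF cands_sub \<open>t \<in> ?C\<close>] .
  then have tV: "t \<in> V" "t \<notin> S" by auto
  have fS: "finite S" using step.prems(1) fV by (rule finite_subset)
  have fS1: "finite ?S1" using fS by simp
  have s1: "?S1 \<subseteq> V" using tV(1) step.prems(1) by simp
  have mono': "?S1 \<subseteq> S' \<and> S' \<subseteq> V" by (rule gis_mono[OF step.hyps(5) s1])
  have BV: "B \<subseteq> V" using step.prems(2) cands_sub[of V dst r S] by auto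
  have fB: "finite B" using BV fV by (rule finite_subset)
  have leave: "x = t \<or> dst x t < r" if "x \<in> ?C" "x \<notin> gis_cands V dst r ?S1" for x
  proof -
    have x: "x \<in> V" "x \<notin> S" "\<forall>s\<in>S. r \<le> dst x s" using that(1) unfolding cands_iff[OF fS] by auto
    have "\<not> (x \<in> V \<and> x \<notin> ?S1 \<and> (\<forall>s\<in>?S1. r \<le> dst x s))" using that(2) unfolding cands_iff[OF fS1] .
    then have n: "x \<in> ?S1 \<or> \<not> (\<forall>s\<in>?S1. r \<le> dst x s)" using x(1) by blast
    show ?thesis
    proof (cases "x = t")
      case True then show ?thesis by simp
    next
      case False
      then have "x \<notin> ?S1" using x(2) by simp
      then obtain s where s: "s \<in> ?S1" "\<not> r \<le> dst x s" using n by blast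
      have "s = t" using s x(3) by blast
      then show ?thesis using s(2) by simp
    qed
  qed
  show ?case
  proof (cases "B = {}")
    case True
    have "g S \<le> g S'" using nms_mono[OF nms, of S S'] mono' by auto
    then show ?thesis using True by simp
  next
    case False
    have "\<exists>z\<in>B. B - {z} \<subseteq> gis_cands V dst r ?S1"
    proof (cases "B \<subseteq> gis_cands V dst r ?S1")
      case True
      then show ?thesis using False by blast
    next
      case False
      then obtain y where y: "y \<in> B" "y \<notin> gis_cands V dst r ?S1" by blast
      have "B - {y} \<subseteq> gis_cands V dst r ?S1"
      proof
        fix w assume w: "w \<in> B - {y}"
        show "w \<in> gis_cands V dst r ?S1"
        proof (rule ccontr)
          assume wn: "w \<notin> gis_cands V dst r ?S1"
          have yC: "y \<in> ?C" "y \<in> Opt" using y(1) step.prems(2) by auto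
          have wC: "w \<in> ?C" "w \<in> Opt" "w \<noteq> y" using w step.prems(2) by auto
          have ly: "y = t \<or> dst y t < r" by (rule leave[OF yC(1) y(2)])
          have lw: "w = t \<or> dst w t < r" by (rule leave[OF wC(1) wn])
          have yV: "y \<in> V" and wV: "w \<in> V" using yC wC OV by auto
          have d2: "2 * r \<le> dst y w" using Opw yC(2) wC(2) wC(3) by auto
          have sy: "dst y w = dst w y" by (rule metric_sym[OF met yV wV])
          have swt: "dst w t = dst t w" by (rule metric_sym[OF met wV tV(1)])
          have tri: "dst y w \<le> dst y t + dst t w" by (rule metric_tri[OF met yV tV(1) wV])
          show False
          proof (cases "y = t")
            case True
            then have "dst w t < r" using lw wC(3) by auto
            then show False using True d2 swt r0 by auto
          next
            case False
            then have yt: "dst y t < r" using ly by auto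
            show False
            proof (cases "w = t")
              case True
              then show False using yt d2 r0 by auto
            next
              case False
              then have "dst w t < r" using lw by auto
              then show False using yt d2 tri swt by auto
            qed
          qed
        qed
      qed
      then show ?thesis using y(1) by blast
    qed
    then obtain z where z: "z \<in> B" "B - {z} \<subseteq> gis_cands V dst r ?S1" by blast
    have B1: "B - {z} \<subseteq> Opt \<inter> gis_cands V dst r ?S1" using z(2) step.prems(2) by auto
    have cB: "card (B - {z}) + Suc i \<le> k"
      using step.prems(3) z(1) fB card_Diff1_less[OF fB z(1)] by (simp add: card_Diff_singleton)
    have IH: "(\<Sum>x\<in>B - {z}. g (insert x S') - g S') \<le> g S' - g ?S1"
      by (rule step.IH[OF s1 B1 cB])
    have zC: "z \<in> ?C" using z(1) step.prems(2) by auto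
    have zV: "z \<in> V" using zC cands_sub by (metis Diff_iff subsetD)
    have zS: "z \<notin> S" using zC cands_sub by (metis Diff_iff subsetD)
    have a: "g (insert z S') - g S' \<le> g (insert z S) - g S"
    proof (cases "z \<in> S'")
      case True
      have "g S \<le> g (insert z S)" using nms_mono[OF nms, of S "insert z S"] step.prems(1) zV by auto
      then show ?thesis using True by (simp add: insert_absorb)
    next
      case False
      have "S \<subseteq> S'" using mono' by auto
      then show ?thesis using nms_sub[OF nms _ _ zV False] mono' by blast
    qed
    have b: "g (insert z S) - g S \<le> g ?S1 - g S" using step.hyps(4) zC by blast
    have "(\<Sum>x\<in>B. g (insert x S') - g S') = (g (insert z S') - g S') + (\<Sum>x\<in>B - {z}. g (insert x S') - g S')"
      by (rule sum.remove[OF fB z(1)])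
    then show ?thesis using a b IH by linarith
  qed
qed

lemma sub_sum:
  assumes nms: "nonneg_monotone_submodular V g" and TV: "T \<subseteq> V"
  shows "finite B \<Longrightarrow> B \<subseteq> V \<Longrightarrow> g (T \<union> B) \<le> g T + (\<Sum>x\<in>B. g (insert x T) - g T)"
proof (induction B rule: finite_induct)
  case empty
  then show ?case by simp
next
  case (insert x F)
  have xV: "x \<in> V" and FV: "F \<subseteq> V" using insert.prems by auto
  have IH: "g (T \<union> F) \<le> g T + (\<Sum>x\<in>F. g (insert x T) - g T)" by (rule insert.IH[OF FV])
  have sumeq: "(\<Sum>y\<in>insert x F. g (insert y T) - g T) = (g (insert x T) - g T) + (\<Sum>y\<in>F. g (insert y T) - g T)"
    using insert.hyps by simp
  show ?case
  proof (cases "x \<in> T")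
    case True
    then have "T \<union> insert x F = T \<union> F" by auto
    moreover have "insert x T = T" using True by auto
    ultimately show ?thesis using IH sumeq by simp
  next
    case False
    have e: "T \<union> insert x F = insert x (T \<union> F)" by simp
    have "x \<notin> T \<union> F" using False insert.hyps by simp
    moreover have "T \<union> F \<subseteq> V" using TV FV by simp
    ultimately have "g (insert x (T \<union> F)) - g (T \<union> F) \<le> g (insert x T) - g T"
      using nms_sub[OF nms, of T "T \<union> F" x] xV by simp
    then show ?thesis using IH sumeq e by simp
  qed
qed

lemma greedy_half:
  assumes nms: "nonneg_monotone_submodular V g" and met: "metric_on V dst" and r0: "0 \<le> r"
    and fV: "finite V" and OV: "Opt \<subseteq> V" and Ok: "card Opt \<le> k"
    and Opw: "\<forall>x\<in>Opt. \<forall>y\<in>Opt. x \<noteq> y \<longrightarrow> 2 * r \<le> dst x y"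
    and run: "greedy_indep_set V g dst r k T q"
  shows "g Opt \<le> 2 * g T"
proof -
  have run': "gis_run V g dst r k {} 0 T q" using run unfolding greedy_indep_set_def .
  have c0: "gis_cands V dst r {} = V" using cands_iff[of "{}" _ V dst r] by auto
  have B: "Opt \<subseteq> Opt \<inter> gis_cands V dst r {}" using OV c0 by simp
  have ck: "card Opt + 0 \<le> k" using Ok by simp
  have key: "(\<Sum>x\<in>Opt. g (insert x T) - g T) \<le> g T - g {}"
    by (rule gis_key[OF nms met r0 fV OV Opw run' _ B ck]) simp
  have TV: "T \<subseteq> V" using gis_mono[OF run'] by simp
  have fO: "finite Opt" using OV fV by (rule finite_subset)
  have s: "g (T \<union> Opt) \<le> g T + (\<Sum>x\<in>Opt. g (insert x T) - g T)" by (rule sub_sum[OF nms TV fO OV])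
  have m: "g Opt \<le> g (T \<union> Opt)" using nms_mono[OF nms, of Opt "T \<union> Opt"] TV OV by simp
  have g0: "0 \<le> g {}" using nms_nonneg[OF nms, of "{}"] by simp
  show ?thesis using key s m g0 by linarith
qed

lemma pairs_eq: "{dst u v | u v. u \<in> V \<and> v \<in> V} = (\<lambda>(u,v). dst u v) ` (V \<times> V)"
  by auto

lemma pairs_finite: "finite V \<Longrightarrow> finite {dst u v | u v. u \<in> V \<and> v \<in> V}"
  unfolding pairs_eq by simp

lemma dmax_ge: "finite V \<Longrightarrow> u \<in> V \<Longrightarrow> v \<in> V \<Longrightarrow> dst u v \<le> dmax V dst"
  unfolding dmax_def by (rule Max_ge[OF pairs_finite]) auto

lemma dmax_attained: "finite V \<Longrightarrow> V \<noteq> {} \<Longrightarrow> \<exists>u\<in>V. \<exists>v\<in>V. dst u v = dmax V dst"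
proof -
  assume fV: "finite V" and ne: "V \<noteq> {}"
  have "{dst u v | u v. u \<in> V \<and> v \<in> V} \<noteq> {}" using ne by auto
  then have "dmax V dst \<in> {dst u v | u v. u \<in> V \<and> v \<in> V}"
    unfolding dmax_def by (rule Max_in[OF pairs_finite[OF fV]])
  then obtain u v where "u \<in> V" "v \<in> V" "dmax V dst = dst u v" by blast
  then show ?thesis by metis
qed

lemma dmax_nonneg: "finite V \<Longrightarrow> V \<noteq> {} \<Longrightarrow> metric_on V dst \<Longrightarrow> 0 \<le> dmax V dst"
proof -
  assume fV: "finite V" and ne: "V \<noteq> {}" and met: "metric_on V dst"
  obtain u v where uv: "u \<in> V" "v \<in> V" "dst u v = dmax V dst" using dmax_attained[OF fV ne] by blast
  show ?thesis using metric_nonneg[OF met uv(1,2)] uv(3) by simp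
qed

lemma spairs_finite: "finite S \<Longrightarrow> finite {dst u v | u v. u \<in> S \<and> v \<in> S \<and> u \<noteq> v}"
proof -
  assume fS: "finite S"
  have "{dst u v | u v. u \<in> S \<and> v \<in> S \<and> u \<noteq> v} \<subseteq> (\<lambda>(u,v). dst u v) ` (S \<times> S)" by auto
  then show ?thesis using fS by (meson finite_SigmaI finite_imageI finite_subset)
qed

lemma card2_ex: "finite S \<Longrightarrow> 2 \<le> card S \<Longrightarrow> \<exists>x\<in>S. \<exists>y\<in>S. x \<noteq> y"
proof -
  assume fS: "finite S" and c: "2 \<le> card S"
  then have "S \<noteq> {}" by auto
  then obtain x where x: "x \<in> S" by blast
  have "card (S - {x}) \<ge> 1" using c x fS by (simp add: card_Diff_singleton)
  then have "S - {x} \<noteq> {}" by (metis card.empty not_one_le_zero)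
  then obtain y where "y \<in> S - {x}" by blast
  then show ?thesis using x by blast
qed

lemma div_le_pair:
  assumes fS: "finite S" and xy: "x \<in> S" "y \<in> S" "x \<noteq> y"
  shows "div_mm V dst S \<le> dst x y"
proof -
  have "card {x, y} \<le> card S" using xy fS by (intro card_mono) auto
  then have c: "2 \<le> card S" using xy by simp
  have "Min {dst u v | u v. u \<in> S \<and> v \<in> S \<and> u \<noteq> v} \<le> dst x y"
    by (rule Min_le[OF spairs_finite[OF fS]]) (use xy in auto)
  then show ?thesis using c unfolding div_mm_def by simp
qed

lemma div_ge:
  assumes fS: "finite S" and pw: "\<forall>x\<in>S. \<forall>y\<in>S. x \<noteq> y \<longrightarrow> d \<le> dst x y" and dm: "d \<le> dmax V dst"
  shows "d \<le> div_mm V dst S"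
proof (cases "2 \<le> card S")
  case True
  obtain x y where "x \<in> S" "y \<in> S" "x \<noteq> y" using card2_ex[OF fS True] by blast
  then have ne: "{dst u v | u v. u \<in> S \<and> v \<in> S \<and> u \<noteq> v} \<noteq> {}" by auto
  have "d \<le> Min {dst u v | u v. u \<in> S \<and> v \<in> S \<and> u \<noteq> v}"
    using pw by (subst Min_ge_iff[OF spairs_finite[OF fS] ne]) auto
  then show ?thesis using True unfolding div_mm_def by simp
next
  case False
  then show ?thesis using dm unfolding div_mm_def by simp
qed

lemma div_nonneg:
  assumes fV: "finite V" and ne: "V \<noteq> {}" and met: "metric_on V dst" and SV: "S \<subseteq> V"
  shows "0 \<le> div_mm V dst S"
proof -
  have fS: "finite S" using SV fV by (rule finite_subset)
  have "\<forall>x\<in>S. \<forall>y\<in>S. x \<noteq> y \<longrightarrow> 0 \<le> dst x y" using metric_nonneg[OF met] SV by blast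
  then show ?thesis using div_ge[OF fS _ dmax_nonneg[OF fV ne met]] by blast
qed

lemma div_le_dmax:
  assumes fV: "finite V" and SV: "S \<subseteq> V"
  shows "div_mm V dst S \<le> dmax V dst"
proof (cases "2 \<le> card S")
  case True
  have fS: "finite S" using SV fV by (rule finite_subset)
  obtain x y where xy: "x \<in> S" "y \<in> S" "x \<noteq> y" using card2_ex[OF fS True] by blast
  have "div_mm V dst S \<le> dst x y" by (rule div_le_pair[OF fS xy])
  also have "\<dots> \<le> dmax V dst" using dmax_ge[OF fV] xy SV by blast
  finally show ?thesis .
next
  case False
  then show ?thesis unfolding div_mm_def by simp
qed

lemma f_nonneg:
  assumes "mdms_instance V dst g lam k" "S \<subseteq> V"
  shows "0 \<le> mdms_f V dst g lam S"
proof -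
  have i: "finite V" "V \<noteq> {}" "metric_on V dst" "nonneg_monotone_submodular V g" "0 \<le> lam"
    using assms(1) unfolding mdms_instance_def by auto
  have "0 \<le> g S" by (rule nms_nonneg[OF i(4) assms(2)])
  moreover have "0 \<le> div_mm V dst S" by (rule div_nonneg[OF i(1,2,3) assms(2)])
  ultimately show ?thesis unfolding mdms_f_def using i(5) by simp
qed

lemma opt_attained:
  assumes fV: "finite V"
  shows "\<exists>S. S \<subseteq> V \<and> card S \<le> k \<and> mdms_f V dst g lam S = mdms_opt V dst g lam k"
proof -
  let ?F = "{S. S \<subseteq> V \<and> card S \<le> k}"
  have "?F \<subseteq> Pow V" by auto
  then have fF: "finite ?F" using fV by (meson finite_Pow_iff finite_subset)
  have "{} \<in> ?F" by simp
  then have ne: "mdms_f V dst g lam ` ?F \<noteq> {}" by blast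
  have "mdms_opt V dst g lam k \<in> mdms_f V dst g lam ` ?F"
    unfolding mdms_opt_def by (rule Max_in[OF finite_imageI[OF fF] ne])
  then show ?thesis by auto
qed

lemma pow_le_log:
  fixes e R :: real
  assumes e: "0 < e" and le: "(1 + e) ^ i \<le> R"
  shows "real i \<le> log (1 + e) R"
proof -
  have p: "0 < (1 + e) ^ i" using e by simp
  then have R: "0 < R" using le by simp
  have "log (1 + e) ((1 + e) ^ i) \<le> log (1 + e) R"
    using le p R e by (subst log_le_cancel_iff) auto
  moreover have "log (1 + e) ((1 + e) ^ i) = real i"
    using e by (simp add: log_nat_power)
  ultimately show ?thesis by simp
qed

lemma pow_set_finite:
  fixes e R :: real
  assumes e: "0 < e"
  shows "finite {i::nat. (1 + e) ^ i \<le> R}"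
proof -
  have "{i::nat. (1 + e) ^ i \<le> R} \<subseteq> {..nat \<lceil>log (1 + e) R\<rceil>}"
  proof
    fix i assume "i \<in> {i::nat. (1 + e) ^ i \<le> R}"
    then have "real i \<le> log (1 + e) R" using pow_le_log[OF e] by auto
    then show "i \<in> {..nat \<lceil>log (1 + e) R\<rceil>}" by (simp add: le_nat_iff ceiling_le_iff le_ceiling_iff)
  qed
  then show ?thesis by (rule finite_subset) simp
qed

lemma pow_set_card:
  fixes e R :: real
  assumes e: "0 < e" and R: "1 \<le> R"
  shows "real (card {i::nat. (1 + e) ^ i \<le> R}) \<le> log (1 + e) R + 1"
proof -
  have "{i::nat. (1 + e) ^ i \<le> R} \<subseteq> {..nat \<lfloor>log (1 + e) R\<rfloor>}"
  proof
    fix i assume "i \<in> {i::nat. (1 + e) ^ i \<le> R}"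
    then have "real i \<le> log (1 + e) R" using pow_le_log[OF e] by auto
    then show "i \<in> {..nat \<lfloor>log (1 + e) R\<rfloor>}" by (simp add: le_nat_iff le_floor_iff)
  qed
  then have "card {i::nat. (1 + e) ^ i \<le> R} \<le> card {..nat \<lfloor>log (1 + e) R\<rfloor>}"
    by (rule card_mono[rotated]) simp
  then have c: "card {i::nat. (1 + e) ^ i \<le> R} \<le> nat \<lfloor>log (1 + e) R\<rfloor> + 1" by simp
  have "0 \<le> log (1 + e) R" using e R by simp
  then have "real (nat \<lfloor>log (1 + e) R\<rfloor>) \<le> log (1 + e) R" by linarith
  then show ?thesis using c by linarith
qed

lemma greedy_inv:
  assumes "greedy_indep_set V g dst r k T q" "finite V"
  shows "T \<subseteq> V \<and> card T \<le> k \<and> q \<le> k * (card V + 1)"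
  using gis_inv[of V g dst r k "{}" 0 T q] assms unfolding greedy_indep_set_def by simp

lemma loop_props:
  "gist_loop V g dst lam k ds S0 S q \<Longrightarrow> finite V \<Longrightarrow> S0 \<subseteq> V \<Longrightarrow> card S0 \<le> k \<Longrightarrow>
   S \<subseteq> V \<and> card S \<le> k \<and> mdms_f V dst g lam S0 \<le> mdms_f V dst g lam S \<and>
   (\<forall>d\<in>set ds. \<exists>T qT. greedy_indep_set V g dst d k T qT \<and> mdms_f V dst g lam T \<le> mdms_f V dst g lam S) \<and>
   q \<le> length ds * (k * (card V + 1) + 2)"
proof (induction rule: gist_loop.induct)
  case (nil S)
  then show ?case by simp
next
  case (cons d T qT ds S S' q)
  let ?f = "mdms_f V dst g lam"
  let ?N = "if ?f S \<le> ?f T then T else S"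
  have T: "T \<subseteq> V \<and> card T \<le> k \<and> qT \<le> k * (card V + 1)" by (rule greedy_inv[OF cons.hyps(1) cons.prems(1)])
  have N1: "?N \<subseteq> V" "card ?N \<le> k" using T cons.prems by auto
  have IH: "S' \<subseteq> V \<and> card S' \<le> k \<and> ?f ?N \<le> ?f S' \<and>
   (\<forall>d\<in>set ds. \<exists>T qT. greedy_indep_set V g dst d k T qT \<and> ?f T \<le> ?f S') \<and>
   q \<le> length ds * (k * (card V + 1) + 2)" by (rule cons.IH[OF cons.prems(1) N1])
  have a: "?f S \<le> ?f ?N" "?f T \<le> ?f ?N" by auto
  have b: "?f S \<le> ?f S'" "?f T \<le> ?f S'" using a IH by linarith+
  have c: "\<forall>d'\<in>set (d # ds). \<exists>T qT. greedy_indep_set V g dst d' k T qT \<and> ?f T \<le> ?f S'"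
    using IH b(2) cons.hyps(1) by auto
  have "qT + 2 + q \<le> length (d # ds) * (k * (card V + 1) + 2)" using T IH by simp
  then show ?case using IH b(1) c by blast
qed

lemma loop_exists:
  "finite V \<Longrightarrow> \<exists>S q. gist_loop V g dst lam k ds S0 S q"
proof (induction ds arbitrary: S0)
  case Nil
  then show ?case using gist_loop.nil by blast
next
  case (Cons d ds)
  obtain T qT where T: "greedy_indep_set V g dst d k T qT"
    using gis_exists[OF Cons.prems] unfolding greedy_indep_set_def by blast
  obtain S q where "gist_loop V g dst lam k ds
           (if mdms_f V dst g lam T \<ge> mdms_f V dst g lam S0 then T else S0) S q"
    using Cons.IH[OF Cons.prems] by blast
  then have "gist_loop V g dst lam k (d # ds) S0 S (qT + 2 + q)" by (rule gist_loop.cons[OF T])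
  then show ?case by blast
qed

lemma D_sub: "gist_D V dst e = (\<lambda>i. (1 + e) ^ i * e * dmax V dst / 2) ` {i::nat. (1 + e) ^ i \<le> 2 / e}"
  unfolding gist_D_def by auto

lemma D_finite: "0 < e \<Longrightarrow> finite (gist_D V dst e)"
  unfolding D_sub by (rule finite_imageI[OF pow_set_finite])

lemma gist_exists:
  assumes inst: "mdms_instance V dst g lam k" and e: "0 < e"
  shows "\<exists>S q. gist V g dst lam k e S q"
proof -
  have fV: "finite V" and ne: "V \<noteq> {}" using inst unfolding mdms_instance_def by auto
  obtain S0 q0 where S0: "greedy_indep_set V g dst 0 k S0 q0"
    using gis_exists[OF fV] unfolding greedy_indep_set_def by blast
  obtain u v where uv: "u \<in> V" "v \<in> V" "dst u v = dmax V dst" using dmax_attained[OF fV ne] by blast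
  obtain ds where ds: "distinct ds" "set ds = gist_D V dst e"
    using finite_distinct_list[OF D_finite[OF e]] by blast
  obtain S q1 where L: "gist_loop V g dst lam k ds
          (if mdms_f V dst g lam {u, v} > mdms_f V dst g lam S0 \<and> k \<ge> 2 then {u, v} else S0) S q1"
    using loop_exists[OF fV] by blast
  have "gist V g dst lam k e S (q0 + 2 + q1)"
    unfolding gist_def using S0 uv ds L by blast
  then show ?thesis by blast
qed

lemma approx:
  assumes inst: "mdms_instance V dst g lam k" and e: "0 < e" and e2: "e < 1/2"
    and G: "gist V g dst lam k e S q"
  shows "(1/2 - e) * mdms_opt V dst g lam k \<le> mdms_f V dst g lam S"
proof -
  have fV: "finite V" and ne: "V \<noteq> {}" and met: "metric_on V dst"
    and nms: "nonneg_monotone_submodular V g" and lam: "0 \<le> lam" and k1: "1 \<le> k"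
    using inst unfolding mdms_instance_def by auto
  let ?f = "mdms_f V dst g lam"
  let ?dm = "dmax V dst"
  obtain S0 q0 u v ds q1 where S0: "greedy_indep_set V g dst 0 k S0 q0"
    and uv: "u \<in> V" "v \<in> V" "dst u v = ?dm"
    and ds: "distinct ds" "set ds = gist_D V dst e"
    and L: "gist_loop V g dst lam k ds
          (if ?f {u, v} > ?f S0 \<and> k \<ge> 2 then {u, v} else S0) S q1"
    using G unfolding gist_def by blast
  let ?I = "if ?f {u, v} > ?f S0 \<and> k \<ge> 2 then {u, v} else S0"
  have S0i: "S0 \<subseteq> V \<and> card S0 \<le> k \<and> q0 \<le> k * (card V + 1)" by (rule greedy_inv[OF S0 fV])
  have Ii: "?I \<subseteq> V" "card ?I \<le> k"
  proof -
    have "card {u, v} \<le> 2" by (simp add: card_insert_le_m1)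
    then show "?I \<subseteq> V" "card ?I \<le> k" using S0i uv by auto
  qed
  have LP: "S \<subseteq> V \<and> card S \<le> k \<and> ?f ?I \<le> ?f S \<and>
   (\<forall>d\<in>set ds. \<exists>T qT. greedy_indep_set V g dst d k T qT \<and> ?f T \<le> ?f S)"
    using loop_props[OF L fV Ii] by blast
  have fS0: "?f S0 \<le> ?f S" using LP by (smt (verit))
  have fuv: "k \<ge> 2 \<Longrightarrow> ?f {u, v} \<le> ?f S" using LP by (smt (verit))
  have fS_nn: "0 \<le> ?f S" using f_nonneg[OF inst] LP by blast
  have dm0: "0 \<le> ?dm" by (rule dmax_nonneg[OF fV ne met])
  obtain Sopt where So: "Sopt \<subseteq> V" "card Sopt \<le> k" "?f Sopt = mdms_opt V dst g lam k"
    using opt_attained[OF fV] by blast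
  have fSo: "finite Sopt" using So(1) fV by (rule finite_subset)
  let ?ds = "div_mm V dst Sopt"
  have Sopw: "\<forall>x\<in>Sopt. \<forall>y\<in>Sopt. x \<noteq> y \<longrightarrow> ?ds \<le> dst x y"
    using div_le_pair[OF fSo] by blast
  have ds_le: "?ds \<le> ?dm" by (rule div_le_dmax[OF fV So(1)])
  have fopt: "?f Sopt = g Sopt + lam * ?ds" unfolding mdms_f_def ..
  have gS0: "g S0 \<le> ?f S0"
    using div_nonneg[OF fV ne met, of S0] S0i lam unfolding mdms_f_def by simp
  have main: "?f Sopt \<le> (2 + 2 * e) * ?f S"
  proof (cases "?ds \<le> e * ?dm")
    case True
    have pw0: "\<forall>x\<in>Sopt. \<forall>y\<in>Sopt. x \<noteq> y \<longrightarrow> 2 * 0 \<le> dst x y"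
      using metric_nonneg[OF met] So(1) by auto
    have gh: "g Sopt \<le> 2 * g S0" by (rule greedy_half[OF nms met _ fV So(1) So(2) pw0 S0]) simp
    show ?thesis
    proof (cases "2 \<le> k")
      case True
      have duv: "?dm \<le> div_mm V dst {u, v}"
      proof (rule div_ge)
        show "finite {u, v}" by simp
        show "?dm \<le> ?dm" by simp
        have "dst v u = ?dm" using metric_sym[OF met uv(1,2)] uv(3) by simp
        then show "\<forall>x\<in>{u, v}. \<forall>y\<in>{u, v}. x \<noteq> y \<longrightarrow> ?dm \<le> dst x y" using uv(3) by auto
      qed
      have "0 \<le> g {u, v}" using nms_nonneg[OF nms] uv by simp
      then have "lam * ?dm \<le> ?f {u, v}" using duv lam unfolding mdms_f_def
        by (smt (verit) mult_left_mono)
      then have l1: "lam * ?dm \<le> ?f S" using fuv[OF True] by simp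
      have "lam * ?ds \<le> lam * (e * ?dm)" using \<open>?ds \<le> e * ?dm\<close> lam by (rule mult_left_mono)
      also have "\<dots> = e * (lam * ?dm)" by simp
      also have "\<dots> \<le> e * ?f S" using l1 e by simp
      finally have "lam * ?ds \<le> e * ?f S" .
      then have h: "?f Sopt \<le> 2 * ?f S + e * ?f S" using fopt gh gS0 fS0 by linarith
      have h2: "0 \<le> e * ?f S" using fS_nn e by simp
      have h3: "(2 + 2 * e) * ?f S = 2 * ?f S + 2 * (e * ?f S)" by (simp add: algebra_simps)
      show ?thesis using h h2 h3 by linarith
    next
      case False
      then have "card Sopt < 2" using So(2) by simp
      then have "?ds = ?dm" unfolding div_mm_def by simp
      then have "?dm \<le> e * ?dm" using \<open>?ds \<le> e * ?dm\<close> by simp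
      then have "(1 - e) * ?dm \<le> 0" by (simp add: algebra_simps)
      moreover have "0 < 1 - e" using e2 by simp
      ultimately have "?dm \<le> 0" by (simp add: mult_le_0_iff)
      then have "lam * ?ds \<le> 0" using \<open>?ds = ?dm\<close> lam by (simp add: mult_nonneg_nonpos)
      then have h: "?f Sopt \<le> 2 * ?f S" using fopt gh gS0 fS0 by linarith
      have h2: "0 \<le> e * ?f S" using fS_nn e by simp
      have h3: "(2 + 2 * e) * ?f S = 2 * ?f S + 2 * (e * ?f S)" by (simp add: algebra_simps)
      show ?thesis using h h2 h3 by linarith
    qed
  next
    case False
    then have big: "e * ?dm < ?ds" by simp
    have dmpos: "0 < ?dm"
    proof (rule ccontr)
      assume "\<not> 0 < ?dm"
      then have "?dm = 0" using dm0 by simp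
      then show False using big ds_le by simp
    qed
    have edm: "0 < e * ?dm" using e dmpos by simp
    define R where "R = ?ds / (e * ?dm)"
    have R1: "1 < R" unfolding R_def using big edm by simp
    have Rle: "R \<le> 1 / e" unfolding R_def using ds_le edm e dmpos
      by (simp add: divide_simps)
    let ?J = "{i::nat. (1 + e) ^ i \<le> R}"
    have fJ: "finite ?J" by (rule pow_set_finite[OF e])
    have J0: "0 \<in> ?J" using R1 by simp
    define i0 where "i0 = Max ?J"
    have i0J: "i0 \<in> ?J" unfolding i0_def
    proof (rule Max_in[OF fJ])
      show "?J \<noteq> {}" using J0 by blast
    qed
    have p1: "(1 + e) ^ i0 \<le> R" using i0J by simp
    have p2: "R < (1 + e) ^ Suc i0"
    proof (rule ccontr)
      assume "\<not> R < (1 + e) ^ Suc i0"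
      then have "Suc i0 \<in> ?J" by simp
      then have "Suc i0 \<le> i0" unfolding i0_def using fJ by (rule Max_ge[rotated])
      then show False by simp
    qed
    define d where "d = (1 + e) ^ i0 * e * ?dm / 2"
    have "1 / e \<le> 2 / e" using e by (simp add: divide_right_mono)
    then have "(1 + e) ^ i0 \<le> 2 / e" using p1 Rle by linarith
    then have dD: "d \<in> set ds" unfolding ds(2) gist_D_def d_def by blast
    obtain T qT where T: "greedy_indep_set V g dst d k T qT" "?f T \<le> ?f S" using LP dD by blast
    have pe: "0 < (1 + e) ^ i0" using e by simp
    have "0 \<le> (1 + e) ^ i0 * (e * ?dm)" using pe edm by simp
    then have d0: "0 \<le> d" unfolding d_def by (simp add: mult.assoc)
    have "2 * d = (1 + e) ^ i0 * (e * ?dm)" unfolding d_def by simp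
    also have "\<dots> \<le> R * (e * ?dm)" using edm by (intro mult_right_mono[OF p1]) simp
    also have "\<dots> = ?ds" unfolding R_def using e dmpos by (simp add: field_simps)
    finally have d2: "2 * d \<le> ?ds" .
    have "?ds = R * (e * ?dm)" unfolding R_def using e dmpos by (simp add: field_simps)
    also have "\<dots> < (1 + e) ^ Suc i0 * (e * ?dm)" by (rule mult_strict_right_mono[OF p2 edm])
    also have "\<dots> = 2 * (1 + e) * d" unfolding d_def by (simp add: algebra_simps)
    finally have d3: "?ds < 2 * (1 + e) * d" .
    have pw2: "\<forall>x\<in>Sopt. \<forall>y\<in>Sopt. x \<noteq> y \<longrightarrow> 2 * d \<le> dst x y" using Sopw d2 by fastforce
    have gh: "g Sopt \<le> 2 * g T" by (rule greedy_half[OF nms met d0 fV So(1) So(2) pw2 T(1)])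
    have run': "gis_run V g dst d k {} 0 T qT" using T(1) unfolding greedy_indep_set_def .
    have TV: "T \<subseteq> V" using gis_mono[OF run'] by simp
    have fT: "finite T" using TV fV by (rule finite_subset)
    have Tpw: "\<forall>x\<in>T. \<forall>y\<in>T. x \<noteq> y \<longrightarrow> d \<le> dst x y"
      by (rule gis_pairwise[OF run' _ fV met]) simp_all
    have "d \<le> ?dm" using d2 ds_le d0 by linarith
    then have dT: "d \<le> div_mm V dst T" by (rule div_ge[OF fT Tpw])
    have gT0: "0 \<le> g T" by (rule nms_nonneg[OF nms TV])
    have l1: "lam * ?ds \<le> lam * (2 * (1 + e) * d)" by (rule mult_left_mono[OF less_imp_le[OF d3] lam])
    have "2 * (1 + e) * d \<le> 2 * (1 + e) * div_mm V dst T" using e by (intro mult_left_mono[OF dT]) simp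
    then have l2: "lam * (2 * (1 + e) * d) \<le> lam * (2 * (1 + e) * div_mm V dst T)" by (rule mult_left_mono[OF _ lam])
    have l3: "lam * (2 * (1 + e) * div_mm V dst T) = (2 + 2 * e) * (lam * div_mm V dst T)" by (simp add: algebra_simps)
    have l4: "2 * g T \<le> (2 + 2 * e) * g T" using gT0 e by (simp add: algebra_simps)
    have fT: "?f T = g T + lam * div_mm V dst T" unfolding mdms_f_def ..
    have l5: "(2 + 2 * e) * ?f T = (2 + 2 * e) * g T + (2 + 2 * e) * (lam * div_mm V dst T)"
      unfolding fT by (simp add: algebra_simps)
    have "?f Sopt \<le> (2 + 2 * e) * ?f T" using fopt gh l1 l2 l3 l4 l5 by linarith
    also have "\<dots> \<le> (2 + 2 * e) * ?f S" using e by (intro mult_left_mono[OF T(2)]) simp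
    finally show ?thesis .
  qed
  have "(1/2 - e) * ?f Sopt \<le> (1/2 - e) * ((2 + 2 * e) * ?f S)" using e2 by (intro mult_left_mono[OF main]) simp
  also have "\<dots> = (1 - e - 2 * e * e) * ?f S" by (simp add: algebra_simps)
  also have "\<dots> \<le> 1 * ?f S"
  proof (rule mult_right_mono[OF _ fS_nn])
    have "0 \<le> e * e" by simp
    then show "1 - e - 2 * e * e \<le> 1" using e by linarith
  qed
  finally show ?thesis using So(3) by simp
qed

lemma gist_out:
  assumes inst: "mdms_instance V dst g lam k" and G: "gist V g dst lam k e S q"
  shows "S \<subseteq> V \<and> card S \<le> k"
proof -
  have fV: "finite V" using inst unfolding mdms_instance_def by auto
  let ?f = "mdms_f V dst g lam"
  obtain S0 q0 u v ds q1 where S0: "greedy_indep_set V g dst 0 k S0 q0"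
    and uv: "u \<in> V" "v \<in> V"
    and L: "gist_loop V g dst lam k ds
          (if ?f {u, v} > ?f S0 \<and> k \<ge> 2 then {u, v} else S0) S q1"
    using G unfolding gist_def by blast
  let ?I = "if ?f {u, v} > ?f S0 \<and> k \<ge> 2 then {u, v} else S0"
  have S0i: "S0 \<subseteq> V \<and> card S0 \<le> k \<and> q0 \<le> k * (card V + 1)" by (rule greedy_inv[OF S0 fV])
  have Ii: "?I \<subseteq> V" "card ?I \<le> k"
  proof -
    have "card {u, v} \<le> 2" by (simp add: card_insert_le_m1)
    then show "?I \<subseteq> V" "card ?I \<le> k" using S0i uv by auto
  qed
  show ?thesis using loop_props[OF L fV Ii] by blast
qed

lemma query_bound:
  assumes inst: "mdms_instance V dst g lam k" and e: "0 < e" and e2: "e \<le> 1/2"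
    and G: "gist V g dst lam k e S q"
  shows "real q \<le> 16 * real (card V) * real k * log (1 + e) (1 / e)"
proof -
  have fV: "finite V" and ne: "V \<noteq> {}" and k1: "1 \<le> k"
    using inst unfolding mdms_instance_def by auto
  let ?f = "mdms_f V dst g lam"
  obtain S0 q0 u v ds q1 where S0: "greedy_indep_set V g dst 0 k S0 q0"
    and uv: "u \<in> V" "v \<in> V"
    and ds: "distinct ds" "set ds = gist_D V dst e"
    and L: "gist_loop V g dst lam k ds
          (if ?f {u, v} > ?f S0 \<and> k \<ge> 2 then {u, v} else S0) S q1"
    and q: "q = q0 + 2 + q1"
    using G unfolding gist_def by blast
  let ?I = "if ?f {u, v} > ?f S0 \<and> k \<ge> 2 then {u, v} else S0"
  have S0i: "S0 \<subseteq> V \<and> card S0 \<le> k \<and> q0 \<le> k * (card V + 1)" by (rule greedy_inv[OF S0 fV])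
  have Ii: "?I \<subseteq> V" "card ?I \<le> k"
  proof -
    have "card {u, v} \<le> 2" by (simp add: card_insert_le_m1)
    then show "?I \<subseteq> V" "card ?I \<le> k" using S0i uv by auto
  qed
  have q1: "q1 \<le> length ds * (k * (card V + 1) + 2)" using loop_props[OF L fV Ii] by blast
  let ?n = "card V"
  let ?A = "k * (?n + 1) + 2"
  have n1: "1 \<le> ?n" using fV ne by (simp add: Suc_leI card_gt_0_iff)
  have qA: "q \<le> ?A + length ds * ?A" using q q1 S0i by simp
  have A4: "?A \<le> 4 * k * ?n"
  proof -
    have "k \<le> k * ?n" using n1 by simp
    moreover have "2 \<le> 2 * (k * ?n)" using n1 k1 by (simp add: Suc_le_eq)
    moreover have "?A = k * ?n + k + 2" by simp
    moreover have "4 * k * ?n = 4 * (k * ?n)" by simp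
    ultimately show ?thesis by linarith
  qed
  let ?L = "log (1 + e) (1 / e)"
  have lenD: "length ds = card (gist_D V dst e)" using ds distinct_card by metis
  have "card (gist_D V dst e) \<le> card {i::nat. (1 + e) ^ i \<le> 2 / e}"
    unfolding D_sub by (rule card_image_le[OF pow_set_finite[OF e]])
  moreover have "real (card {i::nat. (1 + e) ^ i \<le> 2 / e}) \<le> log (1 + e) (2 / e) + 1"
    using e e2 by (intro pow_set_card) (simp_all add: field_simps)
  ultimately have lenR: "real (length ds) \<le> log (1 + e) (2 / e) + 1" using lenD by linarith
  have b: "1 < 1 + e" using e by simp
  have "log (1 + e) (2 / e) = log (1 + e) (2 * (1 / e))" by simp
  also have "\<dots> = log (1 + e) 2 + ?L" using e by (subst log_mult) auto
  finally have lg: "log (1 + e) (2 / e) = log (1 + e) 2 + ?L" .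
  have ie: "2 \<le> 1 / e" using e e2 by (simp add: field_simps)
  have "log (1 + e) 2 \<le> ?L" using ie e by (subst log_le_cancel_iff) auto
  moreover have L1: "1 \<le> ?L"
  proof -
    have "1 + e \<le> 1 / e" using ie e2 by linarith
    then have "log (1 + e) (1 + e) \<le> ?L" using e by (subst log_le_cancel_iff) auto
    then show ?thesis using e by simp
  qed
  ultimately have len3: "real (length ds) \<le> 3 * ?L" using lenR lg by linarith
  have "real q \<le> real ?A + real (length ds) * real ?A"
    using qA by (metis of_nat_add of_nat_le_iff of_nat_mult)
  also have "\<dots> \<le> real ?A + (3 * ?L) * real ?A" using len3 by (intro add_left_mono mult_right_mono) auto
  also have "\<dots> = real ?A * (1 + 3 * ?L)" by (simp add: algebra_simps)
  also have "\<dots> \<le> real ?A * (4 * ?L)" using L1 by (intro mult_left_mono) auto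
  also have "\<dots> \<le> real (4 * k * ?n) * (4 * ?L)"
  proof (rule mult_right_mono)
    show "real ?A \<le> real (4 * k * ?n)" using A4 by (simp only: of_nat_le_iff)
    show "0 \<le> 4 * ?L" using L1 by simp
  qed
  also have "\<dots> = 16 * real ?n * real k * ?L" by simp
  finally show ?thesis .
qed

theorem theorem3p1:
  shows "(\<forall>(V::'a set) dst g lam k \<epsilon>. mdms_instance V dst g lam k \<and> \<epsilon> > 0 \<longrightarrow>
            (\<exists>S q. gist V g dst lam k \<epsilon> S q) \<and>
            (\<forall>S q. gist V g dst lam k \<epsilon> S q \<longrightarrow>
               S \<subseteq> V \<and> card S \<le> k \<and>
               mdms_f V dst g lam S \<ge> (1/2 - \<epsilon>) * mdms_opt V dst g lam k))
       \<and> (\<exists>C::real. \<forall>(V::'a set) dst g lam k \<epsilon> S q.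
            mdms_instance V dst g lam k \<and> 0 < \<epsilon> \<and> \<epsilon> \<le> 1/2 \<and> gist V g dst lam k \<epsilon> S q \<longrightarrow>
            real q \<le> C * real (card V) * real k * log (1 + \<epsilon>) (1 / \<epsilon>))"
proof (rule conjI; (intro allI impI)?)
  fix V :: "'a set" and dst g lam k and \<epsilon> :: real
  assume a: "mdms_instance V dst g lam k \<and> \<epsilon> > 0"
  then have inst: "mdms_instance V dst g lam k" and e: "0 < \<epsilon>" by auto
  have ex: "\<exists>S q. gist V g dst lam k \<epsilon> S q" by (rule gist_exists[OF inst e])
  have "S \<subseteq> V \<and> card S \<le> k \<and> mdms_f V dst g lam S \<ge> (1/2 - \<epsilon>) * mdms_opt V dst g lam k"
    if G: "gist V g dst lam k \<epsilon> S q" for S q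
  proof -
  have o: "S \<subseteq> V \<and> card S \<le> k" by (rule gist_out[OF inst G])
  moreover have "(1/2 - \<epsilon>) * mdms_opt V dst g lam k \<le> mdms_f V dst g lam S"
  proof (cases "\<epsilon> < 1/2")
    case True
    then show ?thesis by (rule approx[OF inst e _ G])
  next
    case False
    have fV: "finite V" using inst unfolding mdms_instance_def by auto
    obtain Sopt where So: "Sopt \<subseteq> V" "card Sopt \<le> k" "mdms_f V dst g lam Sopt = mdms_opt V dst g lam k"
      using opt_attained[OF fV] by blast
    have "0 \<le> mdms_opt V dst g lam k" using f_nonneg[OF inst So(1)] So(3) by simp
    moreover have "1/2 - \<epsilon> \<le> 0" using False by simp
    ultimately have "(1/2 - \<epsilon>) * mdms_opt V dst g lam k \<le> 0" by (simp add: mult_nonpos_nonneg)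
    also have "0 \<le> mdms_f V dst g lam S" using f_nonneg[OF inst] o by blast
    finally show ?thesis .
  qed
  ultimately show ?thesis by simp
  qed
  then show "(\<exists>S q. gist V g dst lam k \<epsilon> S q) \<and>
            (\<forall>S q. gist V g dst lam k \<epsilon> S q \<longrightarrow>
               S \<subseteq> V \<and> card S \<le> k \<and>
               mdms_f V dst g lam S \<ge> (1/2 - \<epsilon>) * mdms_opt V dst g lam k)" using ex by blast
next
  show "\<exists>C::real. \<forall>(V::'a set) dst g lam k \<epsilon> S q.
            mdms_instance V dst g lam k \<and> 0 < \<epsilon> \<and> \<epsilon> \<le> 1/2 \<and> gist V g dst lam k \<epsilon> S q \<longrightarrow>
            real q \<le> C * real (card V) * real k * log (1 + \<epsilon>) (1 / \<epsilon>)"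
    using query_bound by blast
qed

end
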